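(* Let $d_1,\dots,d_k$ be positive integers. Then the tensor rank of $W_{d_1}\otimes\cdots\otimes W_{d_k}$, viewed as an element of $(\mathbb{C}^2)^{\otimes(d_1+\cdots+d_k)}$, satisfies $$R_{1,\dots,1}(W_{d_1}\otimes\cdots\otimes W_{d_k})\geq d_1+\cdots+d_k-k+1.$$
   Context: With a basis $\{x,y\}$ of $\mathbb{C}^2$, $W_d=\sum_{j=1}^d x\otimes\cdots\otimes x\otimes y\otimes x\otimes\cdots\otimes x\in(\mathbb{C}^2)^{\otimes d}$ ($y$ in the $j$-th position), i.e. the symmetric tensor corresponding to $x^{d-1}y$. $R_{1,\dots,1}$ denotes tensor rank: the minimal $r$ such that the tensor is a sum of $r$ tensors of the form $v_1\otimes\cdots\otimes v_m$ with $v_j\in\mathbb{C}^2$. *)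

theory Defs
  imports Complex_Main
begin

text \<open>A tensor in (C^2)^{\<otimes>m} is represented by its coordinate function on index
words w :: bool list with length w = m (False = basis vector x, True = basis vector y);
values on words of other lengths are irrelevant.\<close>

type_synonym tensor = "bool list \<Rightarrow> complex"

definition sum_of_rank_one :: "nat \<Rightarrow> nat \<Rightarrow> tensor \<Rightarrow> bool" where
  "sum_of_rank_one m r T \<longleftrightarrow>
     (\<exists>v :: nat \<Rightarrow> nat \<Rightarrow> bool \<Rightarrow> complex.
        \<forall>w. length w = m \<longrightarrow> T w = (\<Sum>i<r. \<Prod>j<m. v i j (w ! j)))"

definition tensor_rank :: "nat \<Rightarrow> tensor \<Rightarrow> nat" where
  "tensor_rank m T = (LEAST r. sum_of_rank_one m r T)"

text \<open>W_d = sum over positions of x \<otimes> ... \<otimes> y \<otimes> ... \<otimes> x: coordinate 1 exactly on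
words of length d with exactly one y.\<close>
definition W :: "nat \<Rightarrow> tensor" where
  "W d w = (if length (filter id w) = 1 then 1 else 0)"

definition tensor_prod :: "nat \<Rightarrow> tensor \<Rightarrow> tensor \<Rightarrow> tensor" where
  "tensor_prod m A B w = A (take m w) * B (drop m w)"

fun W_prod :: "nat list \<Rightarrow> tensor" where
  "W_prod [] = (\<lambda>w. 1)"
| "W_prod (d # ds) = tensor_prod d (W d) (W_prod ds)"

end

theory Submission imports Defs begin

definition g :: "complex \<Rightarrow> complex \<Rightarrow> tensor" where
  "g a b u = (if length (filter id u) = 1 then a else if length (filter id u) = 0 then b else 0)"

fun G :: "(nat \<times> complex \<times> complex) list \<Rightarrow> tensor" where
  "G [] w = 1"
| "G ((d,a,b)#L) w = g a b (take d w) * G L (drop d w)"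

lemma G_d1: "G ((Suc 0,a,b)#(d2,a2,b2)#L) (True#w) = G ((d2,a*a2,a*b2)#L) w"
  by (simp add: g_def)

lemma G_contract: "p * G ((Suc d,a,b)#L) (False#w) + q * G ((Suc d,a,b)#L) (True#w)
   = G ((d, p*a, p*b+q*a)#L) w"
  by (auto simp: g_def algebra_simps)

definition wit :: "(nat \<times> complex \<times> complex) list \<Rightarrow> bool list" where
  "wit L = concat (map (\<lambda>(d,a,b). True # replicate (d-1) False) L)"

lemma wit_props: "\<forall>x\<in>set L. fst x \<ge> 1 \<Longrightarrow> length (wit L) = sum_list (map fst L) \<and> G L (wit L) = (\<Prod>x\<leftarrow>L. fst (snd x))"
proof (induction L)
  case Nil then show ?case by (simp add: wit_def)
next
  case (Cons x L)
  obtain d a b where x: "x = (d,a,b)" by (cases x) auto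
  with Cons have d: "d \<ge> 1" by auto
  have w: "wit ((d,a,b)#L) = (True # replicate (d-1) False) @ wit L" by (simp add: wit_def)
  have l: "length (True # replicate (d-1) False) = d" using d by simp
  have td: "\<And>u v. length u = d \<Longrightarrow> take d (u @ v) = u \<and> drop d (u @ v) = v" by simp
  have t: "take d (wit ((d,a,b)#L)) = True # replicate (d-1) False" unfolding w using td[OF l] by blast
  have dr: "drop d (wit ((d,a,b)#L)) = wit L" unfolding w using td[OF l] by blast
  have "length (wit ((d,a,b)#L)) = d + length (wit L)" using w l by simp
  then show ?case using Cons d t dr unfolding x by (simp add: g_def)
qed

lemma sum_skip:
  fixes f :: "nat \<Rightarrow> complex"
  assumes "t < r" "f t = 0"
  shows "(\<Sum>i<r. f i) = (\<Sum>i<r-1. f (if i < t then i else Suc i))"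
proof -
  have "(\<Sum>i<r. f i) = (\<Sum>i\<in>{..<r}-{t}. f i)"
    using assms by (simp add: sum.remove)
  also have "\<dots> = (\<Sum>i<r-1. f (if i < t then i else Suc i))"
  proof (rule sum.reindex_bij_witness[where i="\<lambda>i. if i < t then i else Suc i" and j="\<lambda>i. if i < t then i else i - 1"])
  qed (use assms in auto)
  finally show ?thesis .
qed

lemma contract_kill:
  assumes dec: "\<forall>w. length w = Suc m \<longrightarrow> T w = (\<Sum>i<r. \<Prod>j<Suc m. v i j (w!j))"
    and tr: "t < r" and kill: "p * v t 0 False + q * v t 0 True = 0" and m: "0 < m"
  shows "sum_of_rank_one m (r-1) (\<lambda>w. p * T (False#w) + q * T (True#w))"
proof -
  define s where "s i = p * v i 0 False + q * v i 0 True" for i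
  define sk where "sk i = (if i < t then i else Suc i)" for i :: nat
  define v' where "v' i j c = (if j = 0 then s (sk i) else 1) * v (sk i) (Suc j) c" for i j c
  show ?thesis unfolding sum_of_rank_one_def
  proof (intro exI allI impI)
    fix w :: "bool list" assume lw: "length w = m"
    have "p * T (False#w) + q * T (True#w)
        = (\<Sum>i<r. s i * (\<Prod>j<m. v i (Suc j) (w!j)))"
    proof -
      have "\<And>c. T (c#w) = (\<Sum>i<r. v i 0 c * (\<Prod>j<m. v i (Suc j) (w!j)))"
        using dec lw by (simp add: prod.lessThan_Suc_shift del: prod.lessThan_Suc)
      then show ?thesis by (simp add: s_def sum_distrib_left sum.distrib algebra_simps)
    qed
    also have "\<dots> = (\<Sum>i<r-1. s (sk i) * (\<Prod>j<m. v (sk i) (Suc j) (w!j)))"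
      unfolding sk_def by (rule sum_skip[OF tr]) (simp add: s_def kill)
    also have "\<dots> = (\<Sum>i<r-1. \<Prod>j<m. v' i j (w!j))"
    proof (rule sum.cong[OF refl])
      fix i
      have "(\<Prod>j<m. v' i j (w!j)) = (\<Prod>j<m. (if j = 0 then s (sk i) else 1)) * (\<Prod>j<m. v (sk i) (Suc j) (w!j))"
        unfolding v'_def by (rule prod.distrib)
      also have "(\<Prod>j<m. (if j = 0 then s (sk i) else 1)) = s (sk i)"
        using m by (subst prod.delta) auto
      finally show "s (sk i) * (\<Prod>j<m. v (sk i) (Suc j) (w!j)) = (\<Prod>j<m. v' i j (w!j))" by simp
    qed
    finally show "p * T (False#w) + q * T (True#w) = (\<Sum>i<r-1. \<Prod>j<m. v' i j (w!j))" .
  qed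
qed

lemma contract_plain:
  assumes "sum_of_rank_one (Suc m) r T" "0 < m"
  shows "sum_of_rank_one m r (\<lambda>w. p * T (False#w) + q * T (True#w))"
proof -
  obtain v where dec: "\<forall>w. length w = Suc m \<longrightarrow> T w = (\<Sum>i<r. \<Prod>j<Suc m. v i j (w!j))"
    using assms(1) unfolding sum_of_rank_one_def by blast
  define v2 where "v2 i = (if i = r then (\<lambda>j c. 0) else v i)" for i
  have dec2: "\<forall>w. length w = Suc m \<longrightarrow> T w = (\<Sum>i<Suc r. \<Prod>j<Suc m. v2 i j (w!j))"
    using dec by (simp add: v2_def prod.lessThan_Suc_shift)
  from contract_kill[OF dec2, of r p q] assms(2) show ?thesis by (simp add: v2_def)
qed

lemma add_decomp:
  assumes "sum_of_rank_one m r1 A" "sum_of_rank_one m r2 B"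
  shows "sum_of_rank_one m (r1+r2) (\<lambda>w. A w + B w)"
proof -
  obtain va where a: "\<forall>w. length w = m \<longrightarrow> A w = (\<Sum>i<r1. \<Prod>j<m. va i j (w!j))"
    using assms(1) unfolding sum_of_rank_one_def by blast
  obtain vb where b: "\<forall>w. length w = m \<longrightarrow> B w = (\<Sum>i<r2. \<Prod>j<m. vb i j (w!j))"
    using assms(2) unfolding sum_of_rank_one_def by blast
  define v where "v i = (if i < r1 then va i else vb (i - r1))" for i
  show ?thesis unfolding sum_of_rank_one_def
  proof (intro exI allI impI)
    fix w :: "bool list" assume "length w = m"
    then have "A w + B w = (\<Sum>i<r1. \<Prod>j<m. v i j (w!j)) + (\<Sum>i<r2. \<Prod>j<m. v (r1 + i) j (w!j))"
      using a b by (simp add: v_def)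
    also have "\<dots> = (\<Sum>i<r1+r2. \<Prod>j<m. v i j (w!j))"
    proof -
      let ?f = "\<lambda>i. \<Prod>j<m. v i j (w!j)"
      have "sum ?f {0..<r1+r2} = sum ?f {0..<r1} + sum ?f {r1..<r1+r2}"
        by (rule sum.atLeastLessThan_concat[symmetric]) auto
      moreover have "sum ?f {r1..<r1+r2} = sum (?f \<circ> plus r1) {0..<r2}"
        by (subst sum.atLeastLessThan_shift_0) simp
      ultimately show ?thesis by (simp add: lessThan_atLeast0)
    qed
    finally show "A w + B w = (\<Sum>i<r1+r2. \<Prod>j<m. v i j (w!j))" .
  qed
qed

lemma prepend_decomp:
  assumes "sum_of_rank_one m r A"
  shows "sum_of_rank_one (Suc m) r (\<lambda>w. \<phi> (hd w) * A (tl w))"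
proof -
  obtain v where a: "\<forall>w. length w = m \<longrightarrow> A w = (\<Sum>i<r. \<Prod>j<m. v i j (w!j))"
    using assms(1) unfolding sum_of_rank_one_def by blast
  define v' where "v' i j = (if j = 0 then (\<lambda>c. \<phi> c) else v i (j - 1))" for i j
  show ?thesis unfolding sum_of_rank_one_def
  proof (intro exI allI impI)
    fix w :: "bool list" assume lw: "length w = Suc m"
    then obtain c u where w: "w = c # u" and lu: "length u = m" by (cases w) auto
    show "\<phi> (hd w) * A (tl w) = (\<Sum>i<r. \<Prod>j<Suc m. v' i j (w!j))"
      using a lu unfolding w by (simp add: prod.lessThan_Suc_shift v'_def sum_distrib_left del: prod.lessThan_Suc)
  qed
qed

lemma exists_decomp: "0 < m \<Longrightarrow> \<exists>r. sum_of_rank_one m r T"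
proof (induction m arbitrary: T)
  case 0 then show ?case by simp
next
  case (Suc m)
  show ?case
  proof (cases "m = 0")
    case True
    have "sum_of_rank_one (Suc 0) (Suc 0) T" unfolding sum_of_rank_one_def
    proof (intro exI allI impI)
      fix w :: "bool list" assume "length w = Suc 0"
      then obtain c where w: "w = [c]" by (cases w) auto
      show "T w = (\<Sum>i<Suc 0. \<Prod>j<Suc 0. (\<lambda>i j c. T [c]) i j (w!j))" by (simp add: w lessThan_Suc)
    qed
    then show ?thesis using True by blast
  next
    case False
    obtain r1 where r1: "sum_of_rank_one m r1 (\<lambda>w. T (False#w))" using Suc.IH False by blast
    obtain r2 where r2: "sum_of_rank_one m r2 (\<lambda>w. T (True#w))" using Suc.IH False by blast
    have "sum_of_rank_one (Suc m) (r1+r2) (\<lambda>w. (\<lambda>c. if c then 0 else 1) (hd w) * T (False # tl w)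
        + (\<lambda>c. if c then 1 else 0) (hd w) * T (True # tl w))"
      by (rule add_decomp[OF prepend_decomp[OF r1] prepend_decomp[OF r2]])
    then have "sum_of_rank_one (Suc m) (r1+r2) T"
      unfolding sum_of_rank_one_def
    proof (elim exE, intro exI allI impI)
      fix v w assume h: "\<forall>w::bool list. length w = Suc m \<longrightarrow> (if hd w then 0 else 1) * T (False # tl w) + (if hd w then 1 else 0) * T (True # tl w) = (\<Sum>i<r1 + r2. \<Prod>j<Suc m. v i j (w ! j))"
        and lw: "length (w::bool list) = Suc m"
      then obtain c u where w: "w = c # u" by (cases w) auto
      show "T w = (\<Sum>i<r1 + r2. \<Prod>j<Suc m. v i j (w ! j))"
        using h[rule_format, OF lw] unfolding w by (cases c) auto
    qed
    then show ?thesis by blast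
  qed
qed

lemma main_bound:
  "n = sum_list (map fst L) \<Longrightarrow> (\<forall>x\<in>set L. fst x \<ge> 1 \<and> fst (snd x) \<noteq> 0)
   \<Longrightarrow> sum_of_rank_one n r (G L) \<Longrightarrow> sum_list (map (\<lambda>x. fst x - 1) L) + 1 \<le> r"
proof (induction n arbitrary: L r rule: less_induct)
  case (less n L r)
  obtain v where dec: "\<forall>w. length w = n \<longrightarrow> G L w = (\<Sum>i<r. \<Prod>j<n. v i j (w!j))"
    using less.prems(3) unfolding sum_of_rank_one_def by blast
  have wp: "length (wit L) = n \<and> G L (wit L) = (\<Prod>x\<leftarrow>L. fst (snd x))"
    using wit_props[of L] less.prems(1,2) by auto
  have nz: "G L (wit L) \<noteq> 0" using wp less.prems(2) by (auto simp: prod_list_zero_iff)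
  have r1: "r \<ge> 1"
  proof (rule ccontr)
    assume "\<not> r \<ge> 1"
    then have "r = 0" by simp
    then show False using dec[rule_format, OF conjunct1[OF wp]] nz by simp
  qed
  show ?case
  proof (cases "sum_list (map (\<lambda>x. fst x - 1) L) = 0")
    case True then show ?thesis using r1 by (subst True) simp
  next
    case False
    then obtain d a b L' where L: "L = (d,a,b)#L'" by (cases L) auto
    have d1: "d \<ge> 1" and a0: "a \<noteq> 0" using less.prems(2) L by auto
    have hL': "\<forall>x\<in>set L'. fst x \<ge> 1 \<and> fst (snd x) \<noteq> 0" using less.prems(2) L by auto
    show ?thesis
    proof (cases "d = 1")
      case True
      then have "sum_list (map (\<lambda>x. fst x - 1) L') \<noteq> 0" using False L by simp
      then obtain d2 a2 b2 L'' where L': "L' = (d2,a2,b2)#L''" by (cases L') auto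
      have d2: "d2 \<ge> 1" "a2 \<noteq> 0" using hL' L' by auto
      define m where "m = sum_list (map fst L')"
      have n: "n = Suc m" using less.prems(1) L True m_def by simp
      have m0: "0 < m" using d2 L' m_def by simp
      have "sum_of_rank_one m r (\<lambda>w. 0 * G L (False#w) + 1 * G L (True#w))"
        using contract_plain[OF _ m0, of r "G L" 0 1] less.prems(3) n by blast
      moreover have "(\<lambda>w. 0 * G L (False#w) + 1 * G L (True#w)) = G ((d2,a*a2,a*b2)#L'')"
        using L L' True by (simp add: G_d1 fun_eq_iff del: G.simps)
      ultimately have "sum_of_rank_one m r (G ((d2,a*a2,a*b2)#L''))" by simp
      moreover have "m = sum_list (map fst ((d2,a*a2,a*b2)#L''))" using m_def L' by simp
      moreover have "\<forall>x\<in>set ((d2,a*a2,a*b2)#L''). fst x \<ge> 1 \<and> fst (snd x) \<noteq> 0"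
        using hL' L' a0 by auto
      ultimately have "sum_list (map (\<lambda>x. fst x - 1) ((d2,a*a2,a*b2)#L'')) + 1 \<le> r"
        using less.IH[of m] n by blast
      then show ?thesis using L L' True by simp
    next
      case False
      then obtain d' where d': "d = Suc d'" "d' \<ge> 1" using d1 by (cases d) auto
      define m where "m = d' + sum_list (map fst L')"
      have n: "n = Suc m" using less.prems(1) L d' m_def by simp
      have m0: "0 < m" using d' m_def by simp
      have "\<exists>t<r. v t 0 True \<noteq> 0"
      proof (rule ccontr)
        assume "\<not> (\<exists>t<r. v t 0 True \<noteq> 0)"
        then have z: "\<forall>t<r. v t 0 True = 0" by simp
        have w0: "wit L ! 0 = True" using L by (simp add: wit_def)
        have "G L (wit L) = (\<Sum>i<r. \<Prod>j<n. v i j (wit L!j))" using dec[rule_format, OF conjunct1[OF wp]] .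
        also have "\<dots> = 0"
        proof (rule sum.neutral, intro ballI)
          fix i assume "i \<in> {..<r}"
          then have "v i 0 (wit L ! 0) = 0" using z w0 by simp
          then show "(\<Prod>j<n. v i j (wit L!j)) = 0" using n
            by (intro prod_zero) auto
        qed
        finally show False using nz by simp
      qed
      then obtain t where t: "t < r" "v t 0 True \<noteq> 0" by blast
      define p where "p = v t 0 True"
      define q where "q = - v t 0 False"
      have kill: "p * v t 0 False + q * v t 0 True = 0" by (simp add: p_def q_def)
      have dec': "\<forall>w. length w = Suc m \<longrightarrow> G L w = (\<Sum>i<r. \<Prod>j<Suc m. v i j (w!j))"
        using dec n by simp
      have "sum_of_rank_one m (r-1) (\<lambda>w. p * G L (False#w) + q * G L (True#w))"
        by (rule contract_kill[OF dec' t(1) kill m0])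
      moreover have "(\<lambda>w. p * G L (False#w) + q * G L (True#w)) = G ((d', p*a, p*b+q*a)#L')"
        unfolding L d'(1) by (rule ext, rule G_contract)
      ultimately have "sum_of_rank_one m (r-1) (G ((d', p*a, p*b+q*a)#L'))" by simp
      moreover have "m = sum_list (map fst ((d', p*a, p*b+q*a)#L'))" using m_def by simp
      moreover have "\<forall>x\<in>set ((d', p*a, p*b+q*a)#L'). fst x \<ge> 1 \<and> fst (snd x) \<noteq> 0"
        using hL' a0 d' t(2) p_def by auto
      moreover have "m < n" using n by simp
      ultimately have "sum_list (map (\<lambda>x. fst x - 1) ((d', p*a, p*b+q*a)#L')) + 1 \<le> r - 1"
        using less.IH by blast
      then show ?thesis using L d' t(1) by simp
    qed
  qed
qed

lemma W_prod_G: "W_prod ds = G (map (\<lambda>d. (d, 1, 0)) ds)"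
proof (induction ds)
  case Nil then show ?case by (auto simp: fun_eq_iff)
next
  case (Cons d ds)
  then show ?case by (auto simp: fun_eq_iff tensor_prod_def W_def g_def)
qed

lemma sum_minus: "\<forall>d\<in>set ds. d > 0 \<Longrightarrow> sum_list (map (\<lambda>x. fst x - 1) (map (\<lambda>d. (d, 1::complex, 0::complex)) ds)) = sum_list ds - length ds"
proof (induction ds)
  case Nil then show ?case by simp
next
  case (Cons d ds)
  have "sum_list ds \<ge> length ds" using Cons.prems
    by (induction ds) (auto)
  with Cons show ?case by auto
qed

theorem proposition4p3:
  fixes ds :: "nat list"
  assumes "\<forall>d \<in> set ds. d > 0"
  shows "tensor_rank (sum_list ds) (W_prod ds) \<ge> sum_list ds - length ds + 1"
proof -
  let ?L = "map (\<lambda>d. (d, 1::complex, 0::complex)) ds"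
  have ex: "\<exists>r. sum_of_rank_one (sum_list ds) r (W_prod ds)"
  proof (cases "sum_list ds = 0")
    case True
    then have "ds = [] \<or> (\<forall>d\<in>set ds. d = 0)" by simp
    with assms have "ds = []" by (cases ds) auto
    then have "sum_of_rank_one (sum_list ds) 1 (W_prod ds)" by (simp add: sum_of_rank_one_def)
    then show ?thesis by blast
  next
    case False
    then have "0 < sum_list ds" by linarith
    then show ?thesis by (rule exists_decomp)
  qed
  have P: "sum_of_rank_one (sum_list ds) (tensor_rank (sum_list ds) (W_prod ds)) (W_prod ds)"
    unfolding tensor_rank_def by (rule LeastI_ex[OF ex])
  have "sum_list (map (\<lambda>x. fst x - 1) ?L) + 1 \<le> tensor_rank (sum_list ds) (W_prod ds)"
    by (rule main_bound[of _ ?L]) (use P assms in \<open>auto simp: W_prod_G comp_def\<close>)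
  then show ?thesis using sum_minus[OF assms] by simp
qed

end
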